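(* In the two-shock setting ($v_\pm>0$, $u_->u_+$, intermediate state $(u_*^{\epsilon_1\epsilon_2},v_*^{\epsilon_1\epsilon_2})$, shock speeds $\sigma_1^{\epsilon_1\epsilon_2},\sigma_2^{\epsilon_1\epsilon_2}$), $$\lim_{\epsilon_1,\epsilon_2\to0}\int_{\sigma_1^{\epsilon_1\epsilon_2}}^{\sigma_2^{\epsilon_1\epsilon_2}}v_*^{\epsilon_1\epsilon_2}\,d\xi=\sigma(v_+-v_-)-(u_+v_+-u_-v_-)=\tfrac12(v_-+v_+)(u_--u_+),\qquad \sigma=\tfrac12(u_-+u_+).$$
   Context: Perturbed Brio system: $u_t+(\tfrac12u^2+\tfrac12\epsilon_1v^2)_x=0$, $v_t+(uv-\epsilon_2v)_x=0$, $\epsilon_1,\epsilon_2>0$, $v>0$, with Riemann data $(u_-,v_-)$ for $x<0$, $(u_+,v_+)$ for $x>0$. A two-shock Riemann solution is one with an intermediate state $(u_*,v_* )$, $v_*>\max(v_-,v_+)$, $u_+<u_*<u_-$, such that $$u_*=u_-+(v_*-v_-)\frac{\epsilon_2-\sqrt{\epsilon_2^2+4\epsilon_1(v_*+v_-)^2}}{v_*+v_-},\qquad u_+=u_*+(v_+-v_* )\frac{\epsilon_2+\sqrt{\epsilon_2^2+4\epsilon_1(v_*+v_+)^2}}{v_*+v_+},$$ with shock speeds $\sigma_1=u_-+\frac{v_*(u_*-u_-)}{v_*-v_-}-\epsilon_2$ and $\sigma_2=u_++\frac{v_*(u_+-u_* )}{v_+-v_*}-\epsilon_2$. The limit is taken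 over parameters for which this solution exists. *)

theory Defs
  imports "HOL-Analysis.Analysis"
begin

text \<open>Two-shock Riemann solution of the perturbed Brio system with parameters e1, e2:
  intermediate state (us, vs) joining (um, vm) (left) and (up, vp) (right).\<close>
definition two_shock :: "real \<Rightarrow> real \<Rightarrow> real \<Rightarrow> real \<Rightarrow> real \<Rightarrow> real \<Rightarrow> real \<Rightarrow> real \<Rightarrow> bool" where
  "two_shock e1 e2 um vm up vp us vs \<longleftrightarrow>
     vs > max vm vp \<and> up < us \<and> us < um \<and>
     us = um + (vs - vm) * (e2 - sqrt (e2^2 + 4 * e1 * (vs + vm)^2)) / (vs + vm) \<and>
     up = us + (vp - vs) * (e2 + sqrt (e2^2 + 4 * e1 * (vs + vp)^2)) / (vs + vp)"

definition sigma1 :: "real \<Rightarrow> real \<Rightarrow> real \<Rightarrow> real \<Rightarrow> real \<Rightarrow> real" where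
  "sigma1 e2 um vm us vs = um + vs * (us - um) / (vs - vm) - e2"

definition sigma2 :: "real \<Rightarrow> real \<Rightarrow> real \<Rightarrow> real \<Rightarrow> real \<Rightarrow> real" where
  "sigma2 e2 up vp us vs = up + vs * (up - us) / (vp - vs) - e2"

end

theory Submission
  imports Defs
begin

lemma sqrt_shift_le:
  fixes p q c :: real
  assumes "p \<ge> 0" "q \<ge> 0" "c \<ge> 0"
  shows "\<bar>sqrt (p + c) - sqrt (q + c)\<bar> \<le> \<bar>sqrt p - sqrt q\<bar>"
proof (cases "p = q")
  case True then show ?thesis by simp
next
  case False
  have A: "sqrt (p + c) - sqrt (q + c) = (p - q) / (sqrt (p + c) + sqrt (q + c))"
  proof -
    have pos: "sqrt (p + c) + sqrt (q + c) > 0" using assms False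
      by (smt (verit) real_sqrt_gt_zero real_sqrt_ge_zero)
    have "(sqrt (p + c) - sqrt (q + c)) * (sqrt (p + c) + sqrt (q + c)) = p - q"
      using assms by (simp add: algebra_simps)
    then show ?thesis using pos by (simp add: field_simps)
  qed
  have B: "sqrt p - sqrt q = (p - q) / (sqrt p + sqrt q)"
  proof -
    have pos: "sqrt p + sqrt q > 0" using assms False
      by (smt (verit) real_sqrt_gt_zero real_sqrt_ge_zero)
    have "(sqrt p - sqrt q) * (sqrt p + sqrt q) = p - q"
      using assms by (simp add: algebra_simps)
    then show ?thesis using pos by (simp add: field_simps)
  qed
  have pos: "sqrt p + sqrt q > 0" using assms False
    by (smt (verit) real_sqrt_gt_zero real_sqrt_ge_zero)
  have le: "sqrt p + sqrt q \<le> sqrt (p + c) + sqrt (q + c)"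
    using assms by (simp add: add_mono)
  have "\<bar>p - q\<bar> / (sqrt (p + c) + sqrt (q + c)) \<le> \<bar>p - q\<bar> / (sqrt p + sqrt q)"
    by (rule divide_left_mono) (use pos le in auto)
  then show ?thesis using A B pos le by (simp add: abs_divide)
qed

lemma abs_sum_aux:
  fixes A B c d :: real
  shows "\<bar>A\<bar> \<le> c \<Longrightarrow> 0 \<le> B \<Longrightarrow> B \<le> d \<Longrightarrow> \<bar>A + B\<bar> \<le> c + d"
  by linarith

lemma main_bound:
  fixes um vm up vp e1 e2 us vs :: real
  assumes vm: "vm > 0" and vp: "vp > 0" and e1: "e1 > 0" and e2: "e2 > 0"
    and ts: "two_shock e1 e2 um vm up vp us vs"
  shows "sigma1 e2 um vm us vs \<le> sigma2 e2 up vp us vs \<and>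
    \<bar>vs * (sigma2 e2 up vp us vs - sigma1 e2 um vm us vs) - (vm + vp) * (um - up) / 2\<bar>
      \<le> 3 * (vm + vp) * e2 + (vm + vp)^2 * sqrt e1"
proof -
  define a where "a = sqrt (e2^2 + 4 * e1 * (vs + vm)^2)"
  define b where "b = sqrt (e2^2 + 4 * e1 * (vs + vp)^2)"
  define X where "X = (e2 + b) / (vs + vp)"
  define Y where "Y = (a - e2) / (vs + vm)"
  have vsm: "vs > vm" and vsp: "vs > vp" and usd: "us = um + (vs - vm) * (e2 - a) / (vs + vm)"
    and upd: "up = us + (vp - vs) * (e2 + b) / (vs + vp)"
    using ts unfolding two_shock_def a_def b_def by auto
  have vs0: "vs > 0" using vsm vm by linarith
  have sA: "a \<ge> 0" "b \<ge> 0" unfolding a_def b_def using e1 by auto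
  have ae2: "a > e2" unfolding a_def
    by (rule real_less_rsqrt) (use e1 vs0 vm e2 in \<open>auto simp: power2_eq_square\<close>)
  have Xpos: "X > 0" unfolding X_def using sA e2 vs0 vp by auto
  have Ypos: "Y > 0" unfolding Y_def using ae2 vs0 vm by auto
  have uY: "us - um = - ((vs - vm) * Y)" unfolding Y_def using usd vs0 vm by (simp add: field_simps)
  have uX: "up - us = (vp - vs) * X" unfolding X_def using upd vs0 vp by (simp add: field_simps)
  have s1: "sigma1 e2 um vm us vs = um - vs * Y - e2"
  proof -
    note uY
    hence "vs * (us - um) = vs * (- ((vs - vm) * Y))" by simp
    also have "\<dots> = (vs - vm) * (- (vs * Y))" by (simp add: algebra_simps)
    finally have e: "vs * (us - um) = (vs - vm) * (- (vs * Y))" .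
    have "vs - vm \<noteq> 0" using vsm by simp
    hence "vs * (us - um) / (vs - vm) = - (vs * Y)" unfolding e by (rule nonzero_mult_div_cancel_left)
    thus ?thesis unfolding sigma1_def by simp
  qed
  have s2: "sigma2 e2 up vp us vs = up + vs * X - e2"
  proof -
    note uX
    hence "vs * (up - us) = vs * ((vp - vs) * X)" by simp
    also have "\<dots> = (vp - vs) * (vs * X)" by (simp add: algebra_simps)
    finally have e: "vs * (up - us) = (vp - vs) * (vs * X)" .
    have "vp - vs \<noteq> 0" using vsp by simp
    hence "vs * (up - us) / (vp - vs) = vs * X" unfolding e by (rule nonzero_mult_div_cancel_left)
    thus ?thesis unfolding sigma2_def by simp
  qed
  have umup: "um - up = (vs - vp) * X + (vs - vm) * Y"
    using uX uY by (simp add: algebra_simps)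
  have diff: "sigma2 e2 up vp us vs - sigma1 e2 um vm us vs = vp * X + vm * Y"
    using s1 s2 umup by (simp add: algebra_simps)
  have se1: "sqrt (4 * e1) = 2 * sqrt e1"
    by (simp add: real_sqrt_mult)
  have bb: "b \<le> e2 + 2 * sqrt e1 * (vs + vp)"
  proof -
    have "b \<le> sqrt (e2^2) + sqrt (4 * e1 * (vs + vp)^2)"
      unfolding b_def by (rule sqrt_add_le_add_sqrt) (use e1 e2 in auto)
    also have "sqrt (4 * e1 * (vs + vp)^2) = 2 * sqrt e1 * (vs + vp)"
      using vs0 vp by (simp add: real_sqrt_mult se1)
    finally show ?thesis using e2 by simp
  qed
  have ab: "a \<le> e2 + 2 * sqrt e1 * (vs + vm)"
  proof -
    have "a \<le> sqrt (e2^2) + sqrt (4 * e1 * (vs + vm)^2)"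
      unfolding a_def by (rule sqrt_add_le_add_sqrt) (use e1 e2 in auto)
    also have "sqrt (4 * e1 * (vs + vm)^2) = 2 * sqrt e1 * (vs + vm)"
      using vs0 vm by (simp add: real_sqrt_mult se1)
    finally show ?thesis using e2 by simp
  qed
  have Xb: "vp * X \<le> 2 * e2 + 2 * sqrt e1 * vp"
  proof -
    have "vp * X = vp * (e2 + b) / (vs + vp)" unfolding X_def by simp
    also have "\<dots> \<le> vp * (2 * e2 + 2 * sqrt e1 * (vs + vp)) / (vs + vp)"
      using bb vp vs0 by (intro divide_right_mono mult_left_mono) auto
    also have "\<dots> = 2 * e2 * (vp / (vs + vp)) + 2 * sqrt e1 * vp"
      using vs0 vp by (simp add: field_simps)
    also have "\<dots> \<le> 2 * e2 * 1 + 2 * sqrt e1 * vp"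
      using vs0 vp e2 by (intro add_right_mono mult_left_mono) auto
    finally show ?thesis by simp
  qed
  have Yb: "vm * Y \<le> e2 + 2 * sqrt e1 * vm"
  proof -
    have "vm * Y \<le> vm * a / (vs + vm)" unfolding Y_def using vm vs0 e2
      by (simp add: divide_right_mono mult_left_mono)
    also have "\<dots> \<le> vm * (e2 + 2 * sqrt e1 * (vs + vm)) / (vs + vm)"
      using ab vm vs0 by (intro divide_right_mono mult_left_mono) auto
    also have "\<dots> = e2 * (vm / (vs + vm)) + 2 * sqrt e1 * vm"
      using vs0 vm by (simp add: field_simps)
    also have "\<dots> \<le> e2 * 1 + 2 * sqrt e1 * vm"
      using vs0 vm e2 by (intro add_right_mono mult_left_mono) auto
    finally show ?thesis by simp
  qed
  define P where "P = (e2 / (vs + vp))^2"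
  define Q where "Q = (e2 / (vs + vm))^2"
  have bq: "b / (vs + vp) = sqrt (P + 4 * e1)"
  proof -
    have "b / (vs + vp) = sqrt (b^2 / (vs + vp)^2)" using sA vs0 vp
      by (simp add: real_sqrt_divide)
    also have "b^2 / (vs + vp)^2 = P + 4 * e1" unfolding b_def P_def using e1 vs0 vp
      by (simp add: field_simps)
    finally show ?thesis .
  qed
  have aq: "a / (vs + vm) = sqrt (Q + 4 * e1)"
  proof -
    have "a / (vs + vm) = sqrt (a^2 / (vs + vm)^2)" using sA vs0 vm
      by (simp add: real_sqrt_divide)
    also have "a^2 / (vs + vm)^2 = Q + 4 * e1" unfolding a_def Q_def using e1 vs0 vm
      by (simp add: field_simps)
    finally show ?thesis .
  qed
  have sq: "\<bar>b / (vs + vp) - a / (vs + vm)\<bar> \<le> \<bar>e2 / (vs + vp) - e2 / (vs + vm)\<bar>"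
  proof -
    have "\<bar>sqrt (P + 4 * e1) - sqrt (Q + 4 * e1)\<bar> \<le> \<bar>sqrt P - sqrt Q\<bar>"
      by (rule sqrt_shift_le) (use e1 in \<open>auto simp: P_def Q_def\<close>)
    moreover have "sqrt P = e2 / (vs + vp)" "sqrt Q = e2 / (vs + vm)"
      unfolding P_def Q_def using e2 vs0 vp vm by auto
    ultimately show ?thesis using aq bq by simp
  qed
  have ee: "vs * \<bar>e2 / (vs + vp) - e2 / (vs + vm)\<bar> \<le> e2"
  proof -
    have "e2 / (vs + vp) - e2 / (vs + vm) = e2 * (vm - vp) / ((vs + vp) * (vs + vm))"
      using vs0 vp vm by (simp add: field_simps)
    hence "vs * \<bar>e2 / (vs + vp) - e2 / (vs + vm)\<bar> = e2 * (vs * \<bar>vm - vp\<bar>) / ((vs + vp) * (vs + vm))"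
      using vs0 vp vm e2 by (simp add: abs_mult abs_divide)
    also have "\<dots> \<le> e2 * ((vs + vp) * (vs + vm)) / ((vs + vp) * (vs + vm))"
    proof -
      have "vs * \<bar>vm - vp\<bar> \<le> vs * vs" using vsm vsp vm vp vs0
        by (intro mult_left_mono) auto
      also have "\<dots> \<le> (vs + vp) * (vs + vm)" using vs0 vp vm
        by (intro mult_mono) auto
      finally show ?thesis using e2 vs0 vp vm
        by (intro divide_right_mono mult_left_mono) auto
    qed
    also have "\<dots> = e2" using vs0 vp vm by simp
    finally show ?thesis .
  qed
  have Dl: "\<bar>vs * X - vs * Y\<bar> \<le> 3 * e2"
  proof -
    have eq: "vs * X - vs * Y = e2 * (vs / (vs + vp)) + e2 * (vs / (vs + vm))
       + vs * (b / (vs + vp) - a / (vs + vm))"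
      unfolding X_def Y_def using vs0 vp vm by (simp add: add_divide_distrib diff_divide_distrib algebra_simps)
    have t1: "e2 * (vs / (vs + vp)) \<le> e2" "e2 * (vs / (vs + vm)) \<le> e2"
      using e2 vs0 vp vm by (auto simp: divide_le_eq)
    have t0: "e2 * (vs / (vs + vp)) \<ge> 0" "e2 * (vs / (vs + vm)) \<ge> 0"
      using e2 vs0 vp vm by auto
    have t3: "\<bar>vs * (b / (vs + vp) - a / (vs + vm))\<bar> \<le> e2"
      using ee sq vs0 by (simp add: abs_mult)
        (meson less_imp_le mult_left_mono order_trans)
    show ?thesis using eq t1 t0 t3 by linarith
  qed
  define M where "M = vm + vp"
  have key: "vs * (vp * X + vm * Y) - M * (um - up) / 2
      = (vp - vm) * (vs * X - vs * Y) / 2 + M * (vp * X + vm * Y) / 2"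
    unfolding M_def umup by (simp add: field_simps)
  have k1: "\<bar>(vp - vm) * (vs * X - vs * Y) / 2\<bar> \<le> M * (3 * e2) / 2"
  proof -
    have "\<bar>(vp - vm) * (vs * X - vs * Y)\<bar> \<le> M * (3 * e2)"
      unfolding abs_mult M_def using Dl vm vp
      by (intro mult_mono) auto
    then show ?thesis by simp
  qed
  have k2: "M * (vp * X + vm * Y) / 2 \<le> M * (3 * e2 + 2 * sqrt e1 * M) / 2"
    using Xb Yb unfolding M_def using vm vp
    by (intro divide_right_mono mult_left_mono) (auto simp: algebra_simps)
  have k3: "M * (vp * X + vm * Y) / 2 \<ge> 0" unfolding M_def using vm vp Xpos Ypos by auto
  have fin: "\<bar>vs * (vp * X + vm * Y) - M * (um - up) / 2\<bar> \<le> 3 * M * e2 + M^2 * sqrt e1"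
  proof -
    have r: "M * (3 * e2 + 2 * sqrt e1 * M) / 2 = 3 * M * e2 / 2 + M^2 * sqrt e1"
      by (simp add: power2_eq_square algebra_simps)
    have r2: "M * (3 * e2) / 2 = 3 * M * e2 / 2" by simp
    have "\<bar>(vp - vm) * (vs * X - vs * Y) / 2 + M * (vp * X + vm * Y) / 2\<bar>
       \<le> M * (3 * e2) / 2 + M * (3 * e2 + 2 * sqrt e1 * M) / 2"
      by (rule abs_sum_aux[OF k1 k3 k2])
    then show ?thesis unfolding key r r2 by simp
  qed
  have "vp * X + vm * Y \<ge> 0" using Xpos Ypos vp vm by simp
  then show ?thesis
    using fin diff unfolding M_def by (simp add: algebra_simps)
qed

theorem lemma5p4:
  fixes um vm up vp :: real
  assumes "vm > 0" and "vp > 0" and "um > up"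
  defines "\<sigma> \<equiv> (um + up) / 2"
  shows "(\<forall>\<epsilon>>0. \<exists>\<delta>>0. \<forall>e1 e2 us vs.
            0 < e1 \<and> e1 < \<delta> \<and> 0 < e2 \<and> e2 < \<delta> \<and> two_shock e1 e2 um vm up vp us vs \<longrightarrow>
            \<bar>integral {sigma1 e2 um vm us vs .. sigma2 e2 up vp us vs} (\<lambda>\<xi>. vs)
               - (\<sigma> * (vp - vm) - (up * vp - um * vm))\<bar> < \<epsilon>)
         \<and> \<sigma> * (vp - vm) - (up * vp - um * vm) = (vm + vp) * (um - up) / 2"
proof -
  have eqT: "\<sigma> * (vp - vm) - (up * vp - um * vm) = (vm + vp) * (um - up) / 2"
    unfolding \<sigma>_def by (simp add: field_simps)
  define M where "M = vm + vp"
  define K where "K = 3 * M + M^2"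
  have Mpos: "M > 0" and Kpos: "K > 0" using assms unfolding M_def K_def by (auto intro!: add_pos_nonneg)
  have "\<exists>\<delta>>0. \<forall>e1 e2 us vs.
            0 < e1 \<and> e1 < \<delta> \<and> 0 < e2 \<and> e2 < \<delta> \<and> two_shock e1 e2 um vm up vp us vs \<longrightarrow>
            \<bar>integral {sigma1 e2 um vm us vs .. sigma2 e2 up vp us vs} (\<lambda>\<xi>. vs)
               - (\<sigma> * (vp - vm) - (up * vp - um * vm))\<bar> < \<epsilon>" if ep: "\<epsilon> > 0" for \<epsilon>
  proof -
    define t where "t = min 1 (\<epsilon> / (2 * K))"
    have t0: "t > 0" "t \<le> 1" "t \<le> \<epsilon> / (2 * K)" unfolding t_def using ep Kpos by auto
    have Kt: "K * t < \<epsilon>"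
    proof -
      have "K * t \<le> K * (\<epsilon> / (2 * K))" using t0 Kpos by (intro mult_left_mono) auto
      also have "\<dots> = \<epsilon> / 2" using Kpos by simp
      finally show ?thesis using ep by linarith
    qed
    show ?thesis
    proof (intro exI[of _ "t^2"] conjI allI impI)
      show "t^2 > 0" using t0 by simp
      fix e1 e2 us vs
      assume h: "0 < e1 \<and> e1 < t^2 \<and> 0 < e2 \<and> e2 < t^2 \<and> two_shock e1 e2 um vm up vp us vs"
      hence mb: "sigma1 e2 um vm us vs \<le> sigma2 e2 up vp us vs \<and>
        \<bar>vs * (sigma2 e2 up vp us vs - sigma1 e2 um vm us vs) - (vm + vp) * (um - up) / 2\<bar>
        \<le> 3 * (vm + vp) * e2 + (vm + vp)^2 * sqrt e1"
        using main_bound assms by blast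
      have int: "integral {sigma1 e2 um vm us vs .. sigma2 e2 up vp us vs} (\<lambda>\<xi>. vs)
          = vs * (sigma2 e2 up vp us vs - sigma1 e2 um vm us vs)"
        using mb by (simp add: content_real)
      have e2t: "e2 < t" using h t0 by (smt (verit) mult_left_le power2_eq_square)
      have e1t: "sqrt e1 < t"
        using h t0 by (metis real_sqrt_abs real_sqrt_less_mono abs_of_pos)
      have "3 * M * e2 + M^2 * sqrt e1 \<le> 3 * M * t + M^2 * t"
        using e2t e1t Mpos by (intro add_mono mult_left_mono) auto
      hence "3 * M * e2 + M^2 * sqrt e1 < \<epsilon>" using Kt unfolding K_def
        by (simp add: algebra_simps)
      then show "\<bar>integral {sigma1 e2 um vm us vs .. sigma2 e2 up vp us vs} (\<lambda>\<xi>. vs)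
               - (\<sigma> * (vp - vm) - (up * vp - um * vm))\<bar> < \<epsilon>"
        using mb int eqT unfolding M_def by linarith
    qed
  qed
  then show ?thesis using eqT by blast
qed

end
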